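(* Let $K_m$ and $L_n$ be regular languages over the same alphabet $\Sigma$ with state complexities $m$ and $n$ respectively. Then the state complexity of $K_m^R\setminus L_n^R$ is at most $(2^m-1)(2^n-1)+1$, and the state complexity of $K_m^R\oplus L_n^R$ is at most $2^{m+n-1}$.
   Context: The state complexity of a regular language is the number of states of its minimal complete DFA. $L^R$ denotes the reversal of $L$; $\setminus$ is set difference and $\oplus$ is symmetric difference. *)

theory Defs
  imports Main
begin

definition is_dfa :: "'a set \<Rightarrow> nat \<Rightarrow> nat \<Rightarrow> (nat \<Rightarrow> 'a \<Rightarrow> nat) \<Rightarrow> nat set \<Rightarrow> bool" where
  "is_dfa Al n q0 delta F \<longleftrightarrow>
     q0 < n \<and> F \<subseteq> {0..<n} \<and> (\<forall>q<n. \<forall>a\<in>Al. delta q a < n)"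

definition dfa_lang :: "'a set \<Rightarrow> nat \<Rightarrow> (nat \<Rightarrow> 'a \<Rightarrow> nat) \<Rightarrow> nat set \<Rightarrow> 'a list set" where
  "dfa_lang Al q0 delta F = {w \<in> lists Al. foldl delta q0 w \<in> F}"

definition accepted_with :: "'a set \<Rightarrow> nat \<Rightarrow> 'a list set \<Rightarrow> bool" where
  "accepted_with Al n L \<longleftrightarrow>
     (\<exists>q0 delta F. is_dfa Al n q0 delta F \<and> dfa_lang Al q0 delta F = L)"

definition regular_lang :: "'a set \<Rightarrow> 'a list set \<Rightarrow> bool" where
  "regular_lang Al L \<longleftrightarrow> (\<exists>n. accepted_with Al n L)"

definition state_complexity :: "'a set \<Rightarrow> 'a list set \<Rightarrow> nat" where
  "state_complexity Al L = (LEAST n. accepted_with Al n L)"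

definition lang_rev :: "'a list set \<Rightarrow> 'a list set" where
  "lang_rev L = rev ` L"

definition sym_diff :: "'b set \<Rightarrow> 'b set \<Rightarrow> 'b set" where
  "sym_diff A B = (A - B) \<union> (B - A)"

end

theory Submission
  imports Defs
begin

lemma encode_dfa:
  assumes fin: "finite Q" and q0: "q0 \<in> Q" and cl: "\<And>q a. q \<in> Q \<Longrightarrow> a \<in> Al \<Longrightarrow> D q a \<in> Q"
  shows "accepted_with Al (card Q) {w \<in> lists Al. foldl D q0 w \<in> F}"
proof -
  obtain f where f: "bij_betw f Q {0..<card Q}" using ex_bij_betw_finite_nat[OF fin] by blast
  define g where "g = inv_into Q f"
  have gf: "\<And>q. q \<in> Q \<Longrightarrow> g (f q) = q" unfolding g_def using f
    by (simp add: bij_betw_def)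
  have fQ: "\<And>q. q \<in> Q \<Longrightarrow> f q < card Q" using f by (auto simp: bij_betw_def)
  define d where "d = (\<lambda>i a. f (D (g i) a))"
  have run: "\<And>q. q \<in> Q \<Longrightarrow> foldl d (f q) w = f (foldl D q w) \<and> foldl D q w \<in> Q" if "w \<in> lists Al" for w
    using that
  proof (induction w)
    case Nil then show ?case by simp
  next
    case (Cons a w)
    then show ?case by (simp add: d_def gf cl)
  qed
  have "is_dfa Al (card Q) (f q0) d (f ` (F \<inter> Q))"
  proof -
    have gQ: "\<And>i. i < card Q \<Longrightarrow> g i \<in> Q" unfolding g_def using f
      by (metis atLeastLessThan_iff bij_betw_def inv_into_into zero_le)
    show ?thesis unfolding is_dfa_def d_def
      using fQ q0 gQ cl by auto
  qed
  moreover have "dfa_lang Al (f q0) d (f ` (F \<inter> Q)) = {w \<in> lists Al. foldl D q0 w \<in> F}"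
  proof -
    have "\<And>w. w \<in> lists Al \<Longrightarrow> (foldl d (f q0) w \<in> f ` (F \<inter> Q)) = (foldl D q0 w \<in> F)"
    proof -
      fix w assume w: "w \<in> lists Al"
      have r: "foldl d (f q0) w = f (foldl D q0 w)" "foldl D q0 w \<in> Q" using run[OF w q0] by auto
      have inj: "inj_on f Q" using f by (simp add: bij_betw_def)
      show "(foldl d (f q0) w \<in> f ` (F \<inter> Q)) = (foldl D q0 w \<in> F)"
        unfolding r(1) using r(2) inj by (auto dest: inj_onD)
    qed
    then show ?thesis unfolding dfa_lang_def by auto
  qed
  ultimately show ?thesis unfolding accepted_with_def by blast
qed

lemma sc_le: "accepted_with Al k L \<Longrightarrow> state_complexity Al L \<le> k"
  unfolding state_complexity_def by (rule Least_le)


lemma via_hom: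
  assumes fin: "finite Q" and h0: "h [] \<in> Q" and cl: "\<And>q a. q \<in> Q \<Longrightarrow> a \<in> Al \<Longrightarrow> D q a \<in> Q"
    and step: "\<And>u a. u \<in> lists Al \<Longrightarrow> a \<in> Al \<Longrightarrow> h (u @ [a]) = D (h u) a"
    and sub: "L' \<subseteq> lists Al"
    and mem: "\<And>u. u \<in> lists Al \<Longrightarrow> u \<in> L' \<longleftrightarrow> P (h u)"
  shows "state_complexity Al L' \<le> card Q"
proof -
  have run: "foldl D (h []) w = h w" if "w \<in> lists Al" for w
    using that
  proof (induction w rule: rev_induct)
    case Nil then show ?case by simp
  next
    case (snoc a w)
    then show ?case by (simp add: step)
  qed
  have eq: "L' = {w \<in> lists Al. foldl D (h []) w \<in> {q. P q}}"
  proof (rule set_eqI)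
    fix w
    show "w \<in> L' \<longleftrightarrow> w \<in> {w \<in> lists Al. foldl D (h []) w \<in> {q. P q}}"
    proof (cases "w \<in> lists Al")
      case True then show ?thesis using mem[OF True] run[OF True] by simp
    next
      case False then show ?thesis using sub by auto
    qed
  qed
  have acc: "accepted_with Al (card Q) {w \<in> lists Al. foldl D (h []) w \<in> {q. P q}}"
    by (rule encode_dfa[OF fin h0 cl])
  show ?thesis using sc_le[OF acc] eq by simp
qed

lemma card_pow_minus: "card (Pow {0..<(m::nat)} - {X}) = 2^m - 1" if "X \<subseteq> {0..<m}"
  using that by (simp add: card_Pow card_Diff_singleton)

lemma card_contain: assumes "q0 < (m::nat)"
  shows "card {S. S \<subseteq> {0..<m} \<and> q0 \<in> S} = 2^(m-1)"
proof -
  have "{S. S \<subseteq> {0..<m} \<and> q0 \<in> S} = insert q0 ` Pow ({0..<m} - {q0})"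
  proof (rule set_eqI, rule iffI)
    fix S assume "S \<in> {S. S \<subseteq> {0..<m} \<and> q0 \<in> S}"
    then have "S = insert q0 (S - {q0})" "S - {q0} \<in> Pow ({0..<m} - {q0})" by auto
    then show "S \<in> insert q0 ` Pow ({0..<m} - {q0})" by blast
  qed (use assms in auto)
  moreover have "inj_on (insert q0) (Pow ({0..<m} - {q0}))"
    by (rule inj_onI) (metis Diff_insert_absorb PowD insert_Diff_single subset_Diff_insert)
  ultimately show ?thesis using assms by (simp add: card_image card_Pow)
qed

theorem proposition2:
  fixes Al :: "'a set" and K L :: "'a list set" and m n :: nat
  assumes "finite Al"
    and "regular_lang Al K" and "regular_lang Al L"
    and "state_complexity Al K = m" and "state_complexity Al L = n"
  shows "state_complexity Al (lang_rev K - lang_rev L) \<le> (2^m - 1) * (2^n - 1) + 1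
       \<and> state_complexity Al (sym_diff (lang_rev K) (lang_rev L)) \<le> 2^(m + n - 1)"
proof -
  have "accepted_with Al m K" using assms(2,4) unfolding regular_lang_def state_complexity_def
    by (metis LeastI)
  then obtain q0 \<delta> F where dK: "is_dfa Al m q0 \<delta> F" and lK: "dfa_lang Al q0 \<delta> F = K"
    unfolding accepted_with_def by blast
  have "accepted_with Al n L" using assms(3,5) unfolding regular_lang_def state_complexity_def
    by (metis LeastI)
  then obtain p0 \<gamma> G where dL: "is_dfa Al n p0 \<gamma> G" and lL: "dfa_lang Al p0 \<gamma> G = L"
    unfolding accepted_with_def by blast
  define A where "A = {0..<m}"
  define B where "B = {0..<n}"
  define preK where "preK = (\<lambda>S a. {q. q < m \<and> \<delta> q a \<in> S})"
  define preL where "preL = (\<lambda>S a. {q. q < n \<and> \<gamma> q a \<in> S})"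
  define SK where "SK = (\<lambda>u. {q. q < m \<and> foldl \<delta> q (rev u) \<in> F})"
  define SL where "SL = (\<lambda>u. {q. q < n \<and> foldl \<gamma> q (rev u) \<in> G})"
  have q0m: "q0 < m" and p0n: "p0 < n" using dK dL by (auto simp: is_dfa_def)
  have dm: "\<And>q a. q < m \<Longrightarrow> a \<in> Al \<Longrightarrow> \<delta> q a < m" using dK by (auto simp: is_dfa_def)
  have gn: "\<And>q a. q < n \<Longrightarrow> a \<in> Al \<Longrightarrow> \<gamma> q a < n" using dL by (auto simp: is_dfa_def)
  have SKs: "\<And>u a. a \<in> Al \<Longrightarrow> SK (u @ [a]) = preK (SK u) a"
    unfolding SK_def preK_def using dm by auto
  have SLs: "\<And>u a. a \<in> Al \<Longrightarrow> SL (u @ [a]) = preL (SL u) a"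
    unfolding SL_def preL_def using gn by auto
  have SKA: "\<And>u. SK u \<subseteq> A" unfolding SK_def A_def by auto
  have SLB: "\<And>u. SL u \<subseteq> B" unfolding SL_def B_def by auto
  have pKA: "\<And>S a. preK S a \<subseteq> A" unfolding preK_def A_def by auto
  have pLB: "\<And>S a. preL S a \<subseteq> B" unfolding preL_def B_def by auto
  have mK: "\<And>u. u \<in> lists Al \<Longrightarrow> u \<in> lang_rev K \<longleftrightarrow> q0 \<in> SK u"
  proof -
    fix u :: "'a list" assume u: "u \<in> lists Al"
    have "u \<in> lang_rev K \<longleftrightarrow> rev u \<in> K" unfolding lang_rev_def
      by (metis image_iff rev_rev_ident)
    also have "\<dots> \<longleftrightarrow> q0 \<in> SK u" unfolding lK[symmetric] dfa_lang_def SK_def using u q0m by auto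
    finally show "u \<in> lang_rev K \<longleftrightarrow> q0 \<in> SK u" .
  qed
  have mL: "\<And>u. u \<in> lists Al \<Longrightarrow> u \<in> lang_rev L \<longleftrightarrow> p0 \<in> SL u"
  proof -
    fix u :: "'a list" assume u: "u \<in> lists Al"
    have "u \<in> lang_rev L \<longleftrightarrow> rev u \<in> L" unfolding lang_rev_def
      by (metis image_iff rev_rev_ident)
    also have "\<dots> \<longleftrightarrow> p0 \<in> SL u" unfolding lL[symmetric] dfa_lang_def SL_def using u p0n by auto
    finally show "u \<in> lang_rev L \<longleftrightarrow> p0 \<in> SL u" .
  qed
  have subK: "lang_rev K \<subseteq> lists Al" unfolding lang_rev_def lK[symmetric] dfa_lang_def by auto
  have subL: "lang_rev L \<subseteq> lists Al" unfolding lang_rev_def lL[symmetric] dfa_lang_def by auto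
  have pK0: "\<And>a. preK {} a = {}" unfolding preK_def by auto
  have pLB': "\<And>a. a \<in> Al \<Longrightarrow> preL B a = B" unfolding preL_def B_def using gn by auto
  have pKc: "\<And>X a. a \<in> Al \<Longrightarrow> preK (A - X) a = A - preK X a" unfolding preK_def A_def using dm by auto
  have pLc: "\<And>X a. a \<in> Al \<Longrightarrow> preL (B - X) a = B - preL X a" unfolding preL_def B_def using gn by auto

  define nrm where "nrm = (\<lambda>(S::nat set, T::nat set). if S = {} \<or> T = B then ({}, B) else (S, T))"
  define Q1 where "Q1 = (Pow A - {{}}) \<times> (Pow B - {B}) \<union> {({}, B)}"
  have nQ1: "\<And>S T. S \<subseteq> A \<Longrightarrow> T \<subseteq> B \<Longrightarrow> nrm (S, T) \<in> Q1" unfolding nrm_def Q1_def by auto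
  have part1: "state_complexity Al (lang_rev K - lang_rev L) \<le> card Q1"
  proof (rule via_hom[where h = "\<lambda>u. nrm (SK u, SL u)" and D = "\<lambda>(S, T) a. nrm (preK S a, preL T a)"
        and P = "\<lambda>(S, T). q0 \<in> S \<and> p0 \<notin> T"])
    show "finite Q1" unfolding Q1_def A_def B_def by auto
    show "nrm (SK [], SL []) \<in> Q1" by (rule nQ1[OF SKA SLB])
    show "(\<lambda>(S, T) a. nrm (preK S a, preL T a)) q a \<in> Q1" for q a
      by (cases q) (simp add: nQ1 pKA pLB)
    show "nrm (SK (u @ [a]), SL (u @ [a])) = (\<lambda>(S, T) a. nrm (preK S a, preL T a)) (nrm (SK u, SL u)) a"
      if a: "a \<in> Al" for u a
    proof (cases "SK u = {} \<or> SL u = B")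
      case True
      then have "preK (SK u) a = {} \<or> preL (SL u) a = B" using pK0 pLB'[OF a] by auto
      then show ?thesis using True unfolding SKs[OF a] SLs[OF a] nrm_def
        by (simp add: pK0 pLB'[OF a])
    next
      case False
      then show ?thesis unfolding SKs[OF a] SLs[OF a] nrm_def by simp
    qed
    show "lang_rev K - lang_rev L \<subseteq> lists Al" using subK by auto
    show "u \<in> lang_rev K - lang_rev L \<longleftrightarrow> (\<lambda>(S, T). q0 \<in> S \<and> p0 \<notin> T) (nrm (SK u, SL u))"
      if "u \<in> lists Al" for u
      using that mK mL p0n unfolding nrm_def B_def by auto
  qed
  have cQ1: "card Q1 = (2^m - 1) * (2^n - 1) + 1"
  proof -
    have "card ((Pow A - {{}}) \<times> (Pow B - {B})) = (2^m - 1) * (2^n - 1)"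
      unfolding A_def B_def by (simp add: card_cartesian_product card_Diff_singleton card_Pow)
    moreover have "({}, B) \<notin> (Pow A - {{}}) \<times> (Pow B - {B})" by auto
    moreover have "finite ((Pow A - {{}}) \<times> (Pow B - {B}))" unfolding A_def B_def by auto
    ultimately show ?thesis unfolding Q1_def by simp
  qed

  define nrm2 where "nrm2 = (\<lambda>(S::nat set, T::nat set). if q0 \<in> S then (S, T) else (A - S, B - T))"
  define Q2 where "Q2 = {S. S \<subseteq> A \<and> q0 \<in> S} \<times> Pow B"
  have nQ2: "\<And>S T. S \<subseteq> A \<Longrightarrow> T \<subseteq> B \<Longrightarrow> nrm2 (S, T) \<in> Q2" unfolding nrm2_def Q2_def
    using q0m A_def by auto
  have nc: "\<And>S T. S \<subseteq> A \<Longrightarrow> T \<subseteq> B \<Longrightarrow> nrm2 (A - S, B - T) = nrm2 (S, T)"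
    unfolding nrm2_def using q0m A_def by (auto simp: double_diff)
  have part2: "state_complexity Al (sym_diff (lang_rev K) (lang_rev L)) \<le> card Q2"
  proof (rule via_hom[where h = "\<lambda>u. nrm2 (SK u, SL u)" and D = "\<lambda>(S, T) a. nrm2 (preK S a, preL T a)"
        and P = "\<lambda>(S, T). (q0 \<in> S) \<noteq> (p0 \<in> T)"])
    show "finite Q2" unfolding Q2_def A_def B_def by auto
    show "nrm2 (SK [], SL []) \<in> Q2" by (rule nQ2[OF SKA SLB])
    show "(\<lambda>(S, T) a. nrm2 (preK S a, preL T a)) q a \<in> Q2" for q a
      by (cases q) (simp add: nQ2 pKA pLB)
    show "nrm2 (SK (u @ [a]), SL (u @ [a])) = (\<lambda>(S, T) a. nrm2 (preK S a, preL T a)) (nrm2 (SK u, SL u)) a"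
      if a: "a \<in> Al" for u a
    proof (cases "q0 \<in> SK u")
      case True
      then show ?thesis using SKs[OF a] SLs[OF a] unfolding nrm2_def by simp
    next
      case False
      then have "nrm2 (SK u, SL u) = (A - SK u, B - SL u)" unfolding nrm2_def by simp
      then show ?thesis using SKs[OF a] SLs[OF a] pKc[OF a] pLc[OF a] nc pKA pLB by simp
    qed
    show "sym_diff (lang_rev K) (lang_rev L) \<subseteq> lists Al" using subK subL unfolding sym_diff_def by auto
    show "u \<in> sym_diff (lang_rev K) (lang_rev L) \<longleftrightarrow> (\<lambda>(S, T). (q0 \<in> S) \<noteq> (p0 \<in> T)) (nrm2 (SK u, SL u))"
      if "u \<in> lists Al" for u
      using that mK mL p0n q0m unfolding nrm2_def sym_diff_def A_def B_def by auto
  qed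
  have cQ2: "card Q2 = 2^(m + n - 1)"
  proof -
    have "card Q2 = 2^(m-1) * 2^n" unfolding Q2_def A_def B_def
      using card_contain[OF q0m] by (simp add: card_cartesian_product card_Pow)
    also have "\<dots> = 2^(m - 1 + n)" by (simp add: power_add)
    also have "m - 1 + n = m + n - 1" using q0m by simp
    finally show ?thesis .
  qed
  show ?thesis using part1 cQ1 part2 cQ2 by simp
qed

end
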